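(* For every integer $n\ge 1$, the number of Dumont permutations of the first kind of length $2n$ that avoid the pattern $213$ equals the Catalan number $C_{n-1}=\frac{1}{n}\binom{2n-2}{n-1}$, i.e. $|\mathfrak D^1_{2n}(213)|=C_{n-1}$.
   Context: A Dumont permutation of the first kind of length $2n$ is a permutation $\pi\in\mathfrak S_{2n}$ such that for every $i=1,\dots,2n$: if $\pi(i)$ is even then $i<2n$ and $\pi(i)>\pi(i+1)$; if $\pi(i)$ is odd then $i=2n$ or $\pi(i)<\pi(i+1)$. $\mathfrak D^1_{2n}$ denotes the set of these. A permutation $\sigma$ contains a pattern $\tau\in\mathfrak S_k$ if some subsequence $(\sigma(i_1),\dots,\sigma(i_k))$, $i_1<\dots<i_k$, is order-isomorphic to $\tau$; otherwise $\sigma$ avoids $\tau$. $\mathfrak D^1_{2n}(T)$ denotes the set of permutations in $\mathfrak D^1_{2n}$ avoiding every pattern in $T$. *)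

theory Defs
  imports Complex_Main
begin

text \<open>Permutations of {1..m} are represented as lists w (one-line notation):
  w ! i is the value pi(i+1), positions are 0-based.\<close>

definition is_perm :: "nat \<Rightarrow> nat list \<Rightarrow> bool" where
  "is_perm m w \<longleftrightarrow> length w = m \<and> distinct w \<and> set w = {1..m}"

definition dumont1 :: "nat \<Rightarrow> nat list set" where
  "dumont1 n = {w. is_perm (2*n) w \<and>
     (\<forall>i < 2*n. (even (w ! i) \<longrightarrow> i + 1 < 2*n \<and> w ! i > w ! (i+1)) \<and>
                 (odd (w ! i) \<longrightarrow> i + 1 = 2*n \<or> w ! i < w ! (i+1)))}"

definition contains :: "nat list \<Rightarrow> nat list \<Rightarrow> bool" where
  "contains sigma tau \<longleftrightarrow> (\<exists>idx :: nat \<Rightarrow> nat.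
     (\<forall>a b. a < b \<and> b < length tau \<longrightarrow> idx a < idx b) \<and>
     (\<forall>a < length tau. idx a < length sigma) \<and>
     (\<forall>a < length tau. \<forall>b < length tau.
        (sigma ! idx a < sigma ! idx b \<longleftrightarrow> tau ! a < tau ! b)))"

definition avoids :: "nat list \<Rightarrow> nat list \<Rightarrow> bool" where
  "avoids sigma tau \<longleftrightarrow> \<not> contains sigma tau"

end

theory Submission
  imports Defs
begin


definition av :: "nat list \<Rightarrow> bool" where
  "av w \<longleftrightarrow> (\<forall>i j k. i < j \<longrightarrow> j < k \<longrightarrow> k < length w \<longrightarrow> \<not> (w!j < w!i \<and> w!i < w!k))"

definition dc :: "nat list \<Rightarrow> bool" where
  "dc w \<longleftrightarrow> (\<forall>i<length w. (even (w!i) \<longrightarrow> i+1 < length w \<and> w!(i+1) < w!i) \<and>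
                 (odd (w!i) \<longrightarrow> i+1 = length w \<or> w!i < w!(i+1)))"

definition DD :: "nat \<Rightarrow> nat list set" where
  "DD n = {w \<in> dumont1 n. avoids w [2,1,3]}"

definition PP :: "nat \<Rightarrow> nat list \<Rightarrow> bool" where
  "PP k w \<longleftrightarrow> k \<le> length w \<and> (\<forall>i<k. odd (w!i))"

definition Gs :: "nat \<Rightarrow> nat \<Rightarrow> nat list set" where
  "Gs n k = {w \<in> DD n. PP k w}"

definition ins :: "nat \<Rightarrow> nat \<Rightarrow> nat \<Rightarrow> nat list \<Rightarrow> nat list" where
  "ins p a b v = take p v @ a # b # drop p v"

definition rem :: "nat \<Rightarrow> nat list \<Rightarrow> nat list" where
  "rem p w = take p w @ drop (Suc (Suc p)) w"

lemma avoids_iff: "avoids w [2,1,3] \<longleftrightarrow> av w"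
proof
  assume A: "avoids w [2,1,3]"
  show "av w" unfolding av_def
  proof (intro allI impI notI)
    fix i j k assume h: "i < j" "j < k" "k < length w" "w!j < w!i \<and> w!i < w!k"
    define idx where "idx = (\<lambda>x::nat. if x = 0 then i else if x = 1 then j else k)"
    have "contains w [2,1,3]" unfolding contains_def
    proof (intro exI[of _ idx] conjI allI impI)
      fix a b assume "a < b \<and> b < length [2::nat,1,3]"
      then show "idx a < idx b" using h by (auto simp: idx_def less_Suc_eq numeral_3_eq_3)
    next
      fix a assume "a < length [2::nat,1,3]"
      then show "idx a < length w" using h by (auto simp: idx_def less_Suc_eq numeral_3_eq_3)
    next
      fix a b assume "a < length [2::nat,1,3]" "b < length [2::nat,1,3]"
      then show "(w ! idx a < w ! idx b) = ([2::nat,1,3] ! a < [2,1,3] ! b)"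
        using h by (auto simp: idx_def less_Suc_eq numeral_3_eq_3)
    qed
    then show False using A by (simp add: avoids_def)
  qed
next
  assume B: "av w"
  show "avoids w [2,1,3]" unfolding avoids_def contains_def
  proof
    assume "\<exists>idx. (\<forall>a b. a < b \<and> b < length [2::nat,1,3] \<longrightarrow> idx a < idx b) \<and>
     (\<forall>a<length [2::nat,1,3]. idx a < length w) \<and>
     (\<forall>a<length [2::nat,1,3]. \<forall>b<length [2::nat,1,3]. (w ! idx a < w ! idx b) = ([2::nat,1,3] ! a < [2,1,3] ! b))"
    then obtain idx where i1: "\<forall>a b. a < b \<and> b < length [2::nat,1,3] \<longrightarrow> idx a < idx b"
      and i2: "\<forall>a<length [2::nat,1,3]. idx a < length w"
      and i3: "\<forall>a<length [2::nat,1,3]. \<forall>b<length [2::nat,1,3]. (w ! idx a < w ! idx b) = ([2::nat,1,3] ! a < [2,1,3] ! b)" by blast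
    have "idx 0 < idx 1" "idx 1 < idx 2" "idx 2 < length w" using i1 i2 by auto
    moreover have "w ! idx 1 < w ! idx 0" using i3[rule_format, of 1 0] by simp
    moreover have "w ! idx 0 < w ! idx 2" using i3[rule_format, of 0 2] by simp
    ultimately show False using B unfolding av_def by blast
  qed
qed

lemma DD_iff: "w \<in> DD n \<longleftrightarrow> is_perm (2*n) w \<and> dc w \<and> av w"
  unfolding DD_def dumont1_def avoids_iff by (auto simp: dc_def is_perm_def)

lemma ins_nth: "p \<le> length v \<Longrightarrow> i < length v + 2 \<Longrightarrow> ins p a b v ! i =
   (if i < p then v!i else if i = p then a else if i = Suc p then b else v!(i-2))"
  by (auto simp: ins_def nth_append nth_Cons' min_def)

lemma ins_length[simp]: "p \<le> length v \<Longrightarrow> length (ins p a b v) = length v + 2"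
  by (simp add: ins_def)

lemma rem_ins: "p \<le> length v \<Longrightarrow> rem p (ins p a b v) = v"
  by (simp add: ins_def rem_def)

lemma ins_rem: "Suc p < length w \<Longrightarrow> ins p (w!p) (w!Suc p) (rem p w) = w"
proof -
  assume h: "Suc p < length w"
  have "w = take p w @ drop p w" by simp
  moreover have "drop p w = w!p # w!Suc p # drop (Suc (Suc p)) w"
    using h by (metis Cons_nth_drop_Suc Suc_lessD)
  ultimately show ?thesis using h by (simp add: ins_def rem_def)
qed

lemma set_ins: "set (ins p a b v) = insert a (insert b (set v))"
  by (auto simp: ins_def) (metis append_take_drop_id Un_iff set_append)+

lemma distinct_ins: "distinct (ins p a b v) \<longleftrightarrow> distinct v \<and> a \<notin> set v \<and> b \<notin> set v \<and> a \<noteq> b"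
proof -
  have "distinct (take p v @ drop p v) = distinct v" by simp
  then show ?thesis unfolding ins_def distinct_append
    by (auto dest: in_set_takeD in_set_dropD) (metis append_take_drop_id Un_iff set_append)+
qed

lemma perm_bounds: "is_perm m v \<Longrightarrow> x < length v \<Longrightarrow> 1 \<le> v!x \<and> v!x \<le> m"
proof -
  assume h: "is_perm m v" "x < length v"
  then have "v!x \<in> set v" by simp
  then show ?thesis using h(1) by (auto simp: is_perm_def)
qed

lemma prefix_inc: "dc v \<Longrightarrow> PP p v \<Longrightarrow> i < j \<Longrightarrow> j < p \<Longrightarrow> v!i < v!j"
proof (induction j)
  case 0 then show ?case by simp
next
  case (Suc j)
  have "j < length v" "odd (v!j)" "Suc j < length v" using Suc.prems by (auto simp: PP_def)
  then have "v!j < v!Suc j" using Suc.prems(1) unfolding dc_def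
    by (metis Suc_eq_plus1 nat_neq_iff)
  show ?case
  proof (cases "i = j")
    case True then show ?thesis using \<open>v!j < v!Suc j\<close> by simp
  next
    case False then show ?thesis using Suc \<open>v!j < v!Suc j\<close> by simp
  qed
qed

lemma PP_lt: "is_perm (2*n) v \<Longrightarrow> 1 \<le> n \<Longrightarrow> PP p v \<Longrightarrow> p < 2*n"
proof (rule ccontr)
  assume h: "is_perm (2*n) v" "1 \<le> n" "PP p v" "\<not> p < 2*n"
  then have "p = 2*n" "length v = 2*n" by (auto simp: PP_def is_perm_def)
  have "(2::nat) \<in> set v" using h by (auto simp: is_perm_def)
  then obtain t where "t < length v" "v!t = 2" by (metis in_set_conv_nth)
  then show False using h \<open>p = 2*n\<close> \<open>length v = 2*n\<close> unfolding PP_def by (metis even_numeral)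
qed

lemma ins_in:
  assumes n: "1 \<le> n" and v: "v \<in> DD n" and P: "PP p v"
  shows "ins p (2*n+1) (2*n+2) v \<in> DD (Suc n)"
proof -
  define a where "a = 2*n+1"
  define b where "b = 2*n+2"
  define w where "w = ins p a b v"
  have pv: "is_perm (2*n) v" and dcv: "dc v" and avv: "av v" using v by (auto simp: DD_iff)
  have lv: "length v = 2*n" using pv by (simp add: is_perm_def)
  have pl: "p < 2*n" using PP_lt[OF pv n P] .
  have lw: "length w = 2*n+2" using pl lv by (simp add: w_def)
  have wn: "\<And>i. i < 2*n+2 \<Longrightarrow> w!i = (if i < p then v!i else if i = p then a else if i = Suc p then b else v!(i-2))"
    using ins_nth[of p v i a b for i] pl lv by (simp add: w_def)
  have vb: "\<And>x. x < 2*n \<Longrightarrow> 1 \<le> v!x \<and> v!x \<le> 2*n" using perm_bounds[OF pv] lv by simp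
  have podd: "\<And>i. i < p \<Longrightarrow> odd (v!i)" using P by (simp add: PP_def)
  have dcv': "\<And>i. i < 2*n \<Longrightarrow> (even (v!i) \<longrightarrow> i+1 < 2*n \<and> v!(i+1) < v!i) \<and> (odd (v!i) \<longrightarrow> i+1 = 2*n \<or> v!i < v!(i+1))"
    using dcv lv by (simp add: dc_def)
  have outside: "\<And>x. x < 2*n+2 \<Longrightarrow> x \<noteq> p \<Longrightarrow> x \<noteq> Suc p \<Longrightarrow>
      w!x = v!(if x<p then x else x-2) \<and> (if x<p then x else x-2) < 2*n"
    using wn pl by auto
  have perm: "is_perm (2*(Suc n)) w"
  proof -
    have "distinct w" unfolding w_def distinct_ins using pv vb by (auto simp: is_perm_def a_def b_def)
    moreover have "set w = {1..2*Suc n}" unfolding w_def set_ins using pv by (auto simp: is_perm_def a_def b_def)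
    ultimately show ?thesis using lw by (simp add: is_perm_def)
  qed
  have dcw: "dc w" unfolding dc_def
  proof (intro allI impI)
    fix i assume "i < length w"
    then have i: "i < 2*n+2" using lw by simp
    consider "i+1 < p" | "i+1 = p" | "i = p" | "i = p+1" | "i \<ge> p+2" by linarith
    then show "(even (w ! i) \<longrightarrow> i + 1 < length w \<and> w ! (i + 1) < w ! i) \<and> (odd (w ! i) \<longrightarrow> i + 1 = length w \<or> w ! i < w ! (i + 1))"
    proof cases
      case 1
      then have "w!i = v!i" "w!(i+1) = v!(i+1)" using wn pl by auto
      then show ?thesis using dcv'[of i] 1 pl lw by auto
    next
      case 2
      then have "w!i = v!i" "w!(i+1) = a" using wn pl by auto
      then show ?thesis using podd[of i] vb[of i] 2 pl by (auto simp: a_def)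
    next
      case 3
      then have "w!i = a" "w!(i+1) = b" using wn pl by auto
      then show ?thesis by (simp add: a_def b_def)
    next
      case 4
      then have "w!i = b" "w!(i+1) = v!p" using wn pl by auto
      then show ?thesis using vb[of p] 4 pl lw by (auto simp: b_def)
    next
      case 5
      then have c1: "w!i = v!(i-2)" "i+1 < 2*n+2 \<Longrightarrow> w!(i+1) = v!(i-1)" using wn pl i by auto
      have c2: "i - 2 + 1 = i - 1" "i - 2 < 2*n" using 5 i by simp_all
      show ?thesis
      proof (cases "i+1 < 2*n+2")
        case True
        then show ?thesis using dcv'[of "i-2"] 5 i lw c1 c2 by auto
      next
        case False
        then have "i - 2 + 1 = 2*n" using i 5 by simp
        then show ?thesis using dcv'[of "i-2"] 5 i lw c1(1) c2 by auto
      qed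
    qed
  qed
  have avw: "av w" unfolding av_def
  proof (intro allI impI notI)
    fix i j k assume ij: "i < j" and jk: "j < k" and k: "k < length w" and pat: "w!j < w!i \<and> w!i < w!k"
    have k2: "k < 2*n+2" using k lw by simp
    show False
    proof (cases "i = p \<or> i = Suc p")
      case True
      then have "k \<noteq> p" "k \<noteq> Suc p \<or> i = p" using ij jk by auto
      then have "k \<noteq> Suc p" using True ij jk by auto
      then have "w!k \<le> 2*n" using outside[OF k2] \<open>k \<noteq> p\<close> vb by metis
      moreover have "w!i \<ge> a" using True wn[of i] k2 ij jk by (auto simp: a_def b_def)
      ultimately show False using pat by (simp add: a_def)
    next
      case False
      note ni = False
      show False
      proof (cases "j = p \<or> j = Suc p")
        case True
        then have "w!j \<ge> a" using wn[of j] k2 ij jk by (auto simp: a_def b_def)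
        moreover have "w!i \<le> 2*n" using outside[of i] ni k2 ij jk vb by (metis less_trans)
        ultimately show False using pat by (simp add: a_def)
      next
        case False
        note nj = False
        show False
        proof (cases "k = p \<or> k = Suc p")
          case True
          then have "j < p" using nj jk by auto
          then have "w!i = v!i" "w!j = v!j" using wn k2 ij jk by auto
          then show False using prefix_inc[OF dcv P ij \<open>j < p\<close>] pat by simp
        next
          case False
          define g where "g x = (if x < p then x else x - 2)" for x
          have o: "w!i = v!(g i)" "w!j = v!(g j)" "w!k = v!(g k)" "g k < 2*n"
            using outside[of i] outside[of j] outside[of k] ni nj False k2 ij jk unfolding g_def
            by (metis less_trans)+
          have "g i < g j" "g j < g k" using ni nj False ij jk unfolding g_def by auto
          then show False using avv o pat lv unfolding av_def by metis
        qed
      qed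
    qed
  qed
  show ?thesis using perm dcw avw unfolding DD_iff w_def a_def b_def by simp
qed


lemma ins_out:
  assumes n: "1 \<le> n" and pl: "p \<le> length v" and w: "ins p (2*n+1) (2*n+2) v \<in> DD (Suc n)"
  shows "v \<in> DD n \<and> PP p v"
proof -
  define a where "a = 2*n+1"
  define b where "b = 2*n+2"
  define w where "w = ins p a b v"
  have pw: "is_perm (2*Suc n) w" and dcw: "dc w" and avw: "av w" using w by (auto simp: DD_iff w_def a_def b_def)
  have lv: "length v = 2*n" using pw pl by (simp add: is_perm_def w_def)
  have lw: "length w = 2*n+2" using pl lv by (simp add: w_def)
  have dv: "distinct v" "a \<notin> set v" "b \<notin> set v" using pw by (auto simp: is_perm_def w_def distinct_ins)
  have sv: "set v = {1..2*n}"
  proof -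
    have "insert a (insert b (set v)) = {1..2*n+2}" using pw by (simp add: is_perm_def w_def set_ins)
    note h = this
    show ?thesis
    proof (intro equalityI subsetI)
      fix x assume x: "x \<in> set v"
      have "x \<in> {1..2*n+2}" using h x by (metis insertCI)
      moreover have "x \<noteq> a" "x \<noteq> b" using dv x by metis+
      ultimately show "x \<in> {1..2*n}" unfolding a_def b_def by auto
    next
      fix x assume x: "x \<in> {1..2*n}"
      then have "x \<in> insert a (insert b (set v))" "x \<noteq> a" "x \<noteq> b" using h unfolding a_def b_def by auto
      then show "x \<in> set v" by blast
    qed
  qed
  have pv: "is_perm (2*n) v" using lv dv sv by (simp add: is_perm_def)
  have wn: "\<And>i. i < 2*n+2 \<Longrightarrow> w!i = (if i < p then v!i else if i = p then a else if i = Suc p then b else v!(i-2))"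
    using ins_nth[of p v i a b for i] pl lv by (simp add: w_def)
  have vb: "\<And>x. x < 2*n \<Longrightarrow> 1 \<le> v!x \<and> v!x \<le> 2*n" using perm_bounds[OF pv] lv by simp
  have dcw': "\<And>i. i < 2*n+2 \<Longrightarrow> (even (w!i) \<longrightarrow> i+1 < 2*n+2 \<and> w!(i+1) < w!i) \<and> (odd (w!i) \<longrightarrow> i+1 = 2*n+2 \<or> w!i < w!(i+1))"
    using dcw lw by (simp add: dc_def)
  have avw': "\<And>i j k. i < j \<Longrightarrow> j < k \<Longrightarrow> k < 2*n+2 \<Longrightarrow> w!j < w!i \<Longrightarrow> w!i < w!k \<Longrightarrow> False"
  proof -
    fix i j k assume "i < j" "j < k" "k < 2*n+2" "w!j < w!i" "w!i < w!k"
    then show False using avw lw unfolding av_def by metis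
  qed
  have P: "PP p v" unfolding PP_def
  proof (intro conjI allI impI)
    show "p \<le> length v" by fact
    fix i assume ip: "i < p"
    show "odd (v!i)"
    proof (rule ccontr)
      assume "\<not> odd (v!i)"
      then have e: "even (w!i)" "w!i = v!i" using wn[of i] ip pl lv by auto
      then have "w!(i+1) < w!i" using dcw'[of i] ip pl lv by auto
      moreover have "w!(p+1) = b" using wn[of "p+1"] pl lv by simp
      moreover have "w!i < b" using e vb[of i] ip pl lv by (simp add: b_def)
      ultimately show False using avw'[of i "i+1" "p+1"] ip pl lv by simp
    qed
  qed
  have dcv: "dc v" unfolding dc_def
  proof (intro allI impI)
    fix i assume "i < length v"
    then have i: "i < 2*n" using lv by simp
    consider "i+1 < p" | "i+1 = p" | "i \<ge> p" by linarith
    then show "(even (v ! i) \<longrightarrow> i + 1 < length v \<and> v ! (i + 1) < v ! i) \<and> (odd (v ! i) \<longrightarrow> i + 1 = length v \<or> v ! i < v ! (i + 1))"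
    proof cases
      case 1
      then have "w!i = v!i" "w!(i+1) = v!(i+1)" using wn pl lv by auto
      then show ?thesis using dcw'[of i] 1 pl lv by auto
    next
      case 2
      have oi: "odd (v!i)" using P 2 by (simp add: PP_def)
      have "i + 1 = 2*n \<or> v!i < v!(i+1)"
      proof (rule ccontr)
        assume "\<not> (i + 1 = 2*n \<or> v!i < v!(i+1))"
        then have c: "i+1 < 2*n" "\<not> v!i < v!p" using i 2 by auto
        then have "v!i \<noteq> v!p" using dv(1) lv 2 by (simp add: nth_eq_iff_index_eq)
        then have yx: "v!p < v!i" using c by simp
        have "2*n \<in> set v" using sv n by simp
        then obtain t where t: "t < 2*n" "v!t = 2*n" using lv by (metis in_set_conv_nth)
        have xle: "v!i < 2*n" using vb[of i] i oi by (metis dvd_triv_left le_neq_implies_less)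
        consider "t < p" | "t = p" | "t > p" by linarith
        then show False
        proof cases
          case 1 then show False using P t unfolding PP_def by (metis dvd_triv_left)
        next
          case 2 then show False using yx xle t by simp
        next
          case 3
          have "w!i = v!i" "w!(p+2) = v!p" "w!(t+2) = v!t" using wn 2 3 t c by auto
          then show False using avw'[of i "p+2" "t+2"] 2 3 t yx xle by simp
        qed
      qed
      then show ?thesis using oi lv by auto
    next
      case 3
      have e1: "w!(i+2) = v!i" using wn[of "i+2"] 3 i by auto
      have e2: "i+1 < 2*n \<Longrightarrow> w!(Suc (Suc (Suc i))) = v!(Suc i)" using wn[of "Suc (Suc (Suc i))"] 3 i by auto
      show ?thesis
      proof (cases "i+1 < 2*n")
        case True
        then show ?thesis using dcw'[of "i+2"] e1 e2 i lv by auto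
      next
        case False
        then show ?thesis using dcw'[of "i+2"] e1 i lv by auto
      qed
    qed
  qed
  have avv: "av v" unfolding av_def
  proof (intro allI impI notI)
    fix i j k assume ij: "i < j" and jk: "j < k" and k: "k < length v" and pat: "v!j < v!i \<and> v!i < v!k"
    define f where "f x = (if x < p then x else x + 2)" for x
    have fw: "\<And>x. x < 2*n \<Longrightarrow> w!(f x) = v!x \<and> f x < 2*n+2" using wn unfolding f_def by auto
    have "f i < f j" "f j < f k" using ij jk unfolding f_def by auto
    then show False using avw'[of "f i" "f j" "f k"] fw[of i] fw[of j] fw[of k] ij jk k lv pat by simp
  qed
  show ?thesis using pv dcv avv P by (simp add: DD_iff)
qed


lemma extr_ab:
  assumes n: "1 \<le> n" and w: "w \<in> DD (Suc n)"
  shows "\<exists>p. Suc p < length w \<and> w!p = 2*n+1 \<and> w!Suc p = 2*n+2"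
proof -
  have pw: "is_perm (2*Suc n) w" and dcw: "dc w" and avw: "av w" using w by (auto simp: DD_iff)
  have lw: "length w = 2*n+2" using pw by (simp add: is_perm_def)
  have sw: "set w = {1..2*n+2}" using pw by (simp add: is_perm_def)
  have "2*n+1 \<in> set w" using sw by simp
  then obtain p where p: "p < length w" "w!p = 2*n+1" by (metis in_set_conv_nth)
  have "2 \<in> set w" using sw n by simp
  then obtain t where t: "t < length w" "w!t = 2" by (metis in_set_conv_nth)
  have "Suc t < length w \<and> w!Suc t < w!t" using dcw t unfolding dc_def by auto
  moreover have "w!Suc t \<ge> 1" using perm_bounds[OF pw] calculation by blast
  ultimately have t1: "Suc t < length w" "w!Suc t = 1" using t by auto
  have "Suc p < length w"
  proof (rule ccontr)
    assume "\<not> Suc p < length w"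
    then have "Suc p = length w" using p by simp
    moreover have "t \<noteq> p" "Suc t \<noteq> p" using t t1 p n by auto
    ultimately have "Suc t < p" using t1 by simp
    then have "\<not> (w!Suc t < w!t \<and> w!t < w!p)" using avw[unfolded av_def, rule_format, of t "Suc t" p] p by simp
    then show False using t t1 p n by simp
  qed
  moreover have "w!p < w!Suc p"
  proof -
    have "odd (w!p)" using p by simp
    then show ?thesis using dcw[unfolded dc_def, rule_format, OF p(1)] calculation by auto
  qed
  moreover have "w!Suc p \<le> 2*n+2" using perm_bounds[OF pw] calculation by auto
  ultimately show ?thesis using p by (intro exI[of _ p]) auto
qed

lemma PP_char:
  assumes "Suc p < length w" "\<forall>i\<le>p. odd (w!i)" "even (w!Suc p)"
  shows "PP k w \<longleftrightarrow> k \<le> Suc p"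
  using assms unfolding PP_def by (metis Suc_leI le_trans less_Suc_eq_le not_le order.strict_implies_order)

lemma finite_DD: "finite (DD n)"
proof -
  have "DD n \<subseteq> {w. set w \<subseteq> {1..2*n} \<and> length w = 2*n}" by (auto simp: DD_iff is_perm_def)
  moreover have "finite {w. set w \<subseteq> {1..2*n} \<and> length w = 2*n}" by (rule finite_lists_length_eq) simp
  ultimately show ?thesis by (rule finite_subset)
qed

lemma finite_Gs: "finite (Gs n k)"
  using finite_DD[of n] by (simp add: Gs_def)

lemma decomp:
  assumes n: "1 \<le> n" and w: "w \<in> DD (Suc n)"
  obtains p v where "w = ins p (2*n+1) (2*n+2) v" "p \<le> length v" "v \<in> DD n" "PP p v"
    "\<And>k. PP k w \<longleftrightarrow> k \<le> Suc p"
proof -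
  obtain p where p: "Suc p < length w" "w!p = 2*n+1" "w!Suc p = 2*n+2" using extr_ab[OF n w] by blast
  define v where "v = rem p w"
  have wv: "w = ins p (2*n+1) (2*n+2) v" using ins_rem[OF p(1)] p by (simp add: v_def)
  have pl: "p \<le> length v" using p(1) by (simp add: v_def rem_def)
  have vP: "v \<in> DD n" "PP p v" using ins_out[OF n pl] w wv by auto
  have "\<And>k. PP k w \<longleftrightarrow> k \<le> Suc p"
  proof (rule PP_char)
    show "Suc p < length w" by fact
    show "even (w!Suc p)" using p by simp
    show "\<forall>i\<le>p. odd (w!i)"
    proof (intro allI impI)
      fix i assume "i \<le> p"
      then show "odd (w!i)"
      proof (cases "i < p")
        case True
        then have "w!i = v!i" using p(1) by (simp add: v_def rem_def nth_append)
        then show ?thesis using vP True by (simp add: PP_def)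
      qed (use p in simp)
    qed
  qed
  then show ?thesis using that wv pl vP by blast
qed

lemma ins_PP:
  assumes n: "1 \<le> n" and v: "v \<in> DD n" and P: "PP q v"
  shows "PP k (ins q (2*n+1) (2*n+2) v) \<longleftrightarrow> k \<le> Suc q"
proof (rule PP_char)
  have ql: "q \<le> length v" using P by (simp add: PP_def)
  show "Suc q < length (ins q (2*n+1) (2*n+2) v)" using ql by simp
  show "even (ins q (2*n+1) (2*n+2) v ! Suc q)" using ins_nth[OF ql, of "Suc q"] ql by simp
  show "\<forall>i\<le>q. odd (ins q (2*n+1) (2*n+2) v ! i)"
  proof (intro allI impI)
    fix i assume "i \<le> q"
    then show "odd (ins q (2*n+1) (2*n+2) v ! i)"
      using ins_nth[OF ql, of i] ql P by (cases "i < q") (auto simp: PP_def)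
  qed
qed

lemma Gs_step:
  assumes n: "1 \<le> n"
  shows "card (Gs (Suc n) (Suc q)) = card (Gs n q) + card (Gs (Suc n) (Suc (Suc q)))"
proof -
  define E where "E = {w \<in> DD (Suc n). PP (Suc q) w \<and> \<not> PP (Suc (Suc q)) w}"
  have PPm: "\<And>w. PP (Suc (Suc q)) w \<Longrightarrow> PP (Suc q) w" by (simp add: PP_def)
  have U: "Gs (Suc n) (Suc q) = E \<union> Gs (Suc n) (Suc (Suc q))" using PPm by (auto simp: Gs_def E_def)
  have Dj: "E \<inter> Gs (Suc n) (Suc (Suc q)) = {}" by (auto simp: Gs_def E_def)
  have Im: "E = ins q (2*n+1) (2*n+2) ` Gs n q"
  proof (intro equalityI subsetI)
    fix w assume "w \<in> E"
    then have w: "w \<in> DD (Suc n)" "PP (Suc q) w" "\<not> PP (Suc (Suc q)) w" by (auto simp: E_def)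
    obtain p v where pv: "w = ins p (2*n+1) (2*n+2) v" "p \<le> length v" "v \<in> DD n" "PP p v"
      "\<And>k. PP k w \<longleftrightarrow> k \<le> Suc p" using decomp[OF n w(1)] by metis
    have "p = q" using w(2,3) pv(5)[of "Suc q"] pv(5)[of "Suc (Suc q)"] by simp
    then show "w \<in> ins q (2*n+1) (2*n+2) ` Gs n q" using pv by (auto simp: Gs_def)
  next
    fix w assume "w \<in> ins q (2*n+1) (2*n+2) ` Gs n q"
    then obtain v where v: "v \<in> DD n" "PP q v" "w = ins q (2*n+1) (2*n+2) v" by (auto simp: Gs_def)
    then show "w \<in> E" using ins_in[OF n v(1,2)] ins_PP[OF n v(1,2)] by (simp add: E_def)
  qed
  have inj: "inj_on (ins q (2*n+1) (2*n+2)) (Gs n q)"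
  proof (rule inj_onI)
    fix x y assume "x \<in> Gs n q" "y \<in> Gs n q" "ins q (2*n+1) (2*n+2) x = ins q (2*n+1) (2*n+2) y"
    moreover have "q \<le> length x" "q \<le> length y" using calculation by (auto simp: Gs_def PP_def)
    ultimately show "x = y" using rem_ins[of q x "2*n+1" "2*n+2"] rem_ins[of q y "2*n+1" "2*n+2"] by metis
  qed
  have "card (Gs (Suc n) (Suc q)) = card E + card (Gs (Suc n) (Suc (Suc q)))"
    unfolding U by (rule card_Un_disjoint) (use Dj finite_Gs[of "Suc n" "Suc q"] U in auto)
  also have "card E = card (Gs n q)" unfolding Im by (rule card_image[OF inj])
  finally show ?thesis .
qed

lemma Gs_0:
  assumes n: "1 \<le> n" shows "Gs (Suc n) 0 = Gs (Suc n) 1"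
proof -
  have "\<And>w. w \<in> DD (Suc n) \<Longrightarrow> PP 1 w"
  proof -
    fix w assume w: "w \<in> DD (Suc n)"
    obtain p v where "\<And>k. PP k w \<longleftrightarrow> k \<le> Suc p" using decomp[OF n w] by metis
    then show "PP 1 w" by simp
  qed
  then show ?thesis by (auto simp: Gs_def PP_def)
qed

lemma Gs_big: "2*n < k \<Longrightarrow> Gs n k = {}"
  by (auto simp: Gs_def PP_def DD_iff is_perm_def)


definition H :: "nat \<Rightarrow> nat \<Rightarrow> int" where
  "H m r = (if r \<le> m then int (2*m - r choose m) - int (2*m - r choose Suc m) else 0)"

lemma H_rec: "H (Suc m) (Suc q) = H m q + H (Suc m) (Suc (Suc q))"
proof (cases "q \<le> m")
  case True
  have e1: "2 * Suc m - Suc q = Suc (2*m - q)" using True by simp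
  have e2: "H (Suc m) (Suc (Suc q)) = int (2*m - q choose Suc m) - int (2*m - q choose Suc (Suc m))"
  proof (cases "q < m")
    case True
    then have "2 * Suc m - Suc (Suc q) = 2*m - q" by simp
    then show ?thesis using True by (simp add: H_def)
  next
    case False
    then have "q = m" using \<open>q \<le> m\<close> by simp
    then show ?thesis by (simp add: H_def binomial_eq_0)
  qed
  show ?thesis using True e1 e2 by (simp add: H_def)
next
  case False
  then show ?thesis by (simp add: H_def)
qed

lemma H_0: "H (Suc m) 0 = H (Suc m) 1"
proof -
  have s: "Suc (2*m) choose m = Suc (2*m) choose Suc m" using binomial_symmetric[of m "Suc (2*m)"] by simp
  have "2 * Suc m = Suc (Suc (2*m))" "2 * Suc m - 1 = Suc (2*m)" by simp_all
  then show ?thesis using s by (simp add: H_def)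
qed

lemma DD1: "DD 1 = {[2,1]}"
proof (intro equalityI subsetI)
  fix w assume w: "w \<in> DD 1"
  then have pw: "is_perm 2 w" and dcw: "dc w" by (auto simp: DD_iff)
  then have "length w = 2" by (simp add: is_perm_def)
  then obtain x y where xy: "w = [x, y]" by (auto simp: numeral_2_eq_2 length_Suc_conv)
  have "set w = {1..2}" "distinct w" using pw by (auto simp: is_perm_def)
  then have v: "1 \<le> x" "x \<le> 2" "1 \<le> y" "y \<le> 2" "x \<noteq> y" using xy by (simp_all add: set_eq_iff) (metis atLeastAtMost_iff insert_iff)+
  have "odd y"
  proof (rule ccontr)
    assume "\<not> odd y"
    then show False using dcw[unfolded dc_def, rule_format, of 1] xy by simp
  qed
  then have "y = 1" using v by presburger
  then have "x = 2" using v by linarith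
  then show "w \<in> {[2,1]}" using xy \<open>y = 1\<close> by simp
next
  fix w assume "w \<in> {[2::nat,1]}"
  then have w: "w = [2,1]" by simp
  have "is_perm 2 w" using w by (auto simp: is_perm_def)
  moreover have "dc w" using w by (auto simp: dc_def less_Suc_eq numeral_2_eq_2)
  moreover have "av w" using w by (auto simp: av_def)
  ultimately show "w \<in> DD 1" by (simp add: DD_iff)
qed

lemma Gs1: "Gs 1 k = (if k = 0 then {[2,1]} else {})"
proof (cases k)
  case 0 then show ?thesis unfolding Gs_def DD1 PP_def by simp
next
  case (Suc j)
  have "\<not> PP k [2,1]"
  proof
    assume "PP k [2,1]"
    then have "odd ([2::nat,1] ! 0)" using Suc unfolding PP_def by blast
    then show False by simp
  qed
  then show ?thesis using Suc unfolding Gs_def DD1 by auto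
qed

lemma Gs1': "Gs (Suc 0) k = (if k = 0 then {[2,1]} else {})"
  using Gs1[of k] by simp

lemma main: "int (card (Gs (Suc m) k)) = H m k"
proof (induction m arbitrary: k)
  case 0
  then show ?case by (simp add: Gs1' H_def)
next
  case (Suc m)
  have A: "\<And>q. 2*m+4 \<le> q + d \<Longrightarrow> int (card (Gs (Suc (Suc m)) (Suc q))) = H (Suc m) (Suc q)" for d
  proof (induction d)
    case 0
    then have "Gs (Suc (Suc m)) (Suc q) = {}" by (intro Gs_big) simp
    moreover have "H (Suc m) (Suc q) = 0" using 0 by (simp add: H_def)
    ultimately show ?case by simp
  next
    case (Suc d)
    show ?case
    proof (cases "2*m+4 \<le> q + d")
      case True
      then show ?thesis using Suc.IH by simp
    next
      case False
      then have "2*m+4 \<le> Suc q + d" using Suc.prems by simp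
      then have i: "int (card (Gs (Suc (Suc m)) (Suc (Suc q)))) = H (Suc m) (Suc (Suc q))" using Suc.IH by simp
      have "card (Gs (Suc (Suc m)) (Suc q)) = card (Gs (Suc m) q) + card (Gs (Suc (Suc m)) (Suc (Suc q)))"
        by (rule Gs_step) simp
      then show ?thesis using i Suc.IH H_rec[of m q] \<open>\<And>k. int (card (Gs (Suc m) k)) = H m k\<close> by simp
    qed
  qed
  show ?case
  proof (cases k)
    case 0
    have "Gs (Suc (Suc m)) 0 = Gs (Suc (Suc m)) 1" by (rule Gs_0) simp
    then show ?thesis using A[of 0 "2*m+4"] H_0[of m] 0 by simp
  next
    case (Suc q)
    then show ?thesis using A[of q "2*m+4"] by simp
  qed
qed

theorem theorem2p1:
  fixes n :: nat
  assumes "n \<ge> 1"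
  shows "real (card {w \<in> dumont1 n. avoids w [2,1,3]})
           = (1 / real n) * real ((2*n - 2) choose (n - 1))"
proof -
  obtain m where m: "n = Suc m" using assms by (cases n) auto
  define S where "S = {w \<in> dumont1 n. avoids w [2,1,3]}"
  define C1 where "C1 = 2*m choose m"
  define C2 where "C2 = 2*m choose Suc m"
  have "S = Gs (Suc m) 0" by (simp add: S_def Gs_def DD_def PP_def m)
  then have c: "int (card S) = int C1 - int C2"
    using main[of m 0] by (simp add: H_def C1_def C2_def)
  have id1: "Suc m * (2*m choose Suc m) = 2*m * ((2*m - 1) choose m)" by (rule binomial_absorption)
  have id2: "(2*m - m) * (2*m choose m) = 2*m * ((2*m - 1) choose m)" by (rule binomial_absorb_comp)
  have "2*m - m = m" by simp
  then have id2': "m * (2*m choose m) = 2*m * ((2*m - 1) choose m)" using id2 by (simp only:)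
  have idn: "Suc m * C2 = m * C1" unfolding C1_def C2_def by (simp only: id1 id2')
  then have r2: "real (Suc m) * real C2 = real m * real C1" by (metis of_nat_mult)
  have ba: "card S + C2 = C1" using c by linarith
  then have r1: "real (card S) + real C2 = real C1" by (metis of_nat_add)
  have r3: "real (card S) = real C1 - real C2" using r1 by linarith
  have e: "real (card S) * real (Suc m) = real C1"
    unfolding r3 using r2 by (simp add: algebra_simps)
  have "2*n - 2 = 2*m" "n - 1 = m" using m by simp_all
  then have "(1 / real n) * real ((2*n - 2) choose (n - 1)) = real C1 / real (Suc m)"
    by (simp add: C1_def m)
  also have "\<dots> = real (card S)" using e by (simp add: field_simps del: of_nat_Suc)
  finally show ?thesis by (simp add: S_def)
qed

end
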